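(* Let $(X,d)$ be a metric space and $\pi:X\to X_0$ a fibration. For $x\in X_0$ let $d_x$ be the restriction of $d$ to the fiber $\pi^{-1}\{x\}$. Let $\mu,\nu$ be measures on $X$ with $\pi_*\mu=\pi_*\nu=\lambda$, and for $x\in X_0$ let $\mu_x,\nu_x$ be the disintegrated measures on $\pi^{-1}(x)$ (so that $\mu=\int\mu_x\,d\lambda(x)$, $\nu=\int\nu_x\,d\lambda(x)$). Then $$d_L(\mu,\nu)\le\sup_{x\in X_0} d_{L,x}(\mu_x,\nu_x),$$ where $d_{L,x}$ denotes the Lévy–Prokhorov distance on $\pi^{-1}(x)$ with respect to $d_x$.
   Context: For measures $\mu,\nu$ on a metric space $(Y,\delta)$, the Lévy–Prokhorov distance is $d_L(\mu,\nu)=\inf\{\varepsilon>0:\ \nu(A_\varepsilon)\ge\mu(A)\ \text{for all } A\subset Y\}$, with $A_\varepsilon$ the $\varepsilon$-neighborhood of $A$ for $\delta$. *)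

theory Defs
  imports "HOL-Analysis.Analysis"
begin

definition nbhd_in :: "'a::metric_space set \<Rightarrow> real \<Rightarrow> 'a set \<Rightarrow> 'a set" where
  "nbhd_in S \<epsilon> A = {y \<in> S. \<exists>x\<in>A. dist x y < \<epsilon>}"

text \<open>Levy--Prokhorov distance of two Borel measures considered on the subspace S
  (metric = restriction of dist to S); test sets are the Borel sets contained in S.
  Value in ennreal, the infimum of the empty set being \<infinity>.\<close>
definition levy_prokhorov_on :: "'a::metric_space set \<Rightarrow> 'a measure \<Rightarrow> 'a measure \<Rightarrow> ennreal" where
  "levy_prokhorov_on S \<mu> \<nu> = Inf {ennreal \<epsilon> | \<epsilon>. \<epsilon> > 0 \<and>
      (\<forall>A. A \<in> sets borel \<longrightarrow> A \<subseteq> S \<longrightarrow> emeasure \<mu> A \<le> emeasure \<nu> (nbhd_in S \<epsilon> A))}"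

abbreviation levy_prokhorov :: "'a::metric_space measure \<Rightarrow> 'a measure \<Rightarrow> ennreal" where
  "levy_prokhorov \<mu> \<nu> \<equiv> levy_prokhorov_on UNIV \<mu> \<nu>"

definition disintegration ::
  "'a::metric_space measure \<Rightarrow> ('a \<Rightarrow> 'b) \<Rightarrow> 'b measure \<Rightarrow> ('b \<Rightarrow> 'a measure) \<Rightarrow> bool" where
  "disintegration \<mu> \<pi> L \<mu>x \<longleftrightarrow>
     (\<forall>x\<in>space L. sets (\<mu>x x) = sets borel \<and> emeasure (\<mu>x x) {y. \<pi> y \<noteq> x} = 0) \<and>
     (\<forall>A\<in>sets borel. (\<lambda>x. emeasure (\<mu>x x) A) \<in> borel_measurable L \<and>
        emeasure \<mu> A = (\<integral>\<^sup>+ x. emeasure (\<mu>x x) A \<partial>L))"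

end

theory Submission
  imports Defs
begin

lemma nbhd_in_eq: "nbhd_in S e A = S \<inter> (\<Union>a\<in>A. ball a e)"
  unfolding nbhd_in_def by auto

lemma nbhd_in_borel: "S \<in> sets borel \<Longrightarrow> nbhd_in S e A \<in> sets borel"
  unfolding nbhd_in_eq by (rule sets.Int) (auto intro!: borel_open open_UN)

lemma nbhd_in_mono: "e' \<le> e \<Longrightarrow> S \<subseteq> T \<Longrightarrow> A' \<subseteq> A \<Longrightarrow> nbhd_in S e' A' \<subseteq> nbhd_in T e A"
  unfolding nbhd_in_def by (auto intro: less_le_trans)

theorem lemma18p0p6:
  fixes \<pi> :: "'a::metric_space \<Rightarrow> 'b::metric_space"
    and \<mu> \<nu> :: "'a measure" and L :: "'b measure"
    and \<mu>x \<nu>x :: "'b \<Rightarrow> 'a measure"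
  assumes sets_\<mu>: "sets \<mu> = sets borel" and sets_\<nu>: "sets \<nu> = sets borel"
    and sets_L: "sets L = sets borel"
    and \<pi>_meas: "\<pi> \<in> borel_measurable borel"
    and push_\<mu>: "distr \<mu> L \<pi> = L" and push_\<nu>: "distr \<nu> L \<pi> = L"
    and dis_\<mu>: "disintegration \<mu> \<pi> L \<mu>x"
    and dis_\<nu>: "disintegration \<nu> \<pi> L \<nu>x"
  shows "levy_prokhorov \<mu> \<nu>
           \<le> (SUP x\<in>space L. levy_prokhorov_on (\<pi> -` {x}) (\<mu>x x) (\<nu>x x))"
proof -
  define s where "s = (SUP x\<in>space L. levy_prokhorov_on (\<pi> -` {x}) (\<mu>x x) (\<nu>x x))"
  have fib: "\<pi> -` {x} \<in> sets borel" for x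
    using \<pi>_meas by (simp add: measurable_sets_borel)
  have key: "emeasure \<mu> A \<le> emeasure \<nu> (nbhd_in UNIV e A)"
    if e: "e > 0" "s < ennreal e" and A: "A \<in> sets borel" for e A
  proof -
    have pt: "emeasure (\<mu>x x) A \<le> emeasure (\<nu>x x) (nbhd_in UNIV e A)" if x: "x \<in> space L" for x
    proof -
      let ?F = "\<pi> -` {x}"
      have sx: "sets (\<mu>x x) = sets borel" "emeasure (\<mu>x x) {y. \<pi> y \<noteq> x} = 0"
        "sets (\<nu>x x) = sets borel"
        using dis_\<mu> dis_\<nu> x unfolding disintegration_def by auto
      have "levy_prokhorov_on ?F (\<mu>x x) (\<nu>x x) \<le> s"
        unfolding s_def using x by (rule SUP_upper)
      then have "levy_prokhorov_on ?F (\<mu>x x) (\<nu>x x) < ennreal e" using e by simp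
      then obtain e' where e': "e' > 0" "ennreal e' < ennreal e"
        and P: "\<forall>B. B \<in> sets borel \<longrightarrow> B \<subseteq> ?F \<longrightarrow>
             emeasure (\<mu>x x) B \<le> emeasure (\<nu>x x) (nbhd_in ?F e' B)"
        unfolding levy_prokhorov_on_def Inf_less_iff by auto
      have "e' < e" using e' ennreal_less_iff by auto
      have AF: "A \<inter> ?F \<in> sets borel" using A fib by auto
      have cfib: "{y. \<pi> y \<noteq> x} \<in> sets borel"
      proof -
        have "{y. \<pi> y \<noteq> x} = space borel - ?F" by auto
        then show ?thesis using fib[of x] by (metis sets.compl_sets)
      qed
      have nul: "A - ?F \<in> null_sets (\<mu>x x)"
      proof -
        have "A - ?F \<in> sets (\<mu>x x)" using A fib sx by auto
        moreover have "emeasure (\<mu>x x) (A - ?F) \<le> emeasure (\<mu>x x) {y. \<pi> y \<noteq> x}"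
          using sx A cfib by (intro emeasure_mono) auto
        ultimately show ?thesis using sx by (auto simp: null_sets_def)
      qed
      have "emeasure (\<mu>x x) A = emeasure (\<mu>x x) ((A \<inter> ?F) \<union> (A - ?F))"
        by (metis Un_Diff_Int sup_commute)
      also have "\<dots> = emeasure (\<mu>x x) (A \<inter> ?F)"
        using AF sx nul by (intro emeasure_Un_null_set) auto
      also have "\<dots> \<le> emeasure (\<nu>x x) (nbhd_in ?F e' (A \<inter> ?F))"
        using P AF by auto
      also have "\<dots> \<le> emeasure (\<nu>x x) (nbhd_in UNIV e A)"
        using sx \<open>e' < e\<close> nbhd_in_borel[of UNIV e A]
        by (intro emeasure_mono nbhd_in_mono) auto
      finally show ?thesis .
    qed
    have "emeasure \<mu> A = (\<integral>\<^sup>+ x. emeasure (\<mu>x x) A \<partial>L)"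
      using dis_\<mu> A unfolding disintegration_def by auto
    also have "\<dots> \<le> (\<integral>\<^sup>+ x. emeasure (\<nu>x x) (nbhd_in UNIV e A) \<partial>L)"
      using pt by (intro nn_integral_mono) auto
    also have "\<dots> = emeasure \<nu> (nbhd_in UNIV e A)"
      using dis_\<nu> nbhd_in_borel[of UNIV e A] unfolding disintegration_def by auto
    finally show ?thesis .
  qed
  have mem: "levy_prokhorov \<mu> \<nu> \<le> ennreal e" if "e > 0" "s < ennreal e" for e
    unfolding levy_prokhorov_on_def
    by (rule Inf_lower) (use that key in auto)
  have "levy_prokhorov \<mu> \<nu> \<le> s"
  proof (rule ennreal_le_epsilon)
    fix d :: real assume d: "s < top" "0 < d"
    then obtain r where r: "s = ennreal r" "r \<ge> 0"
      by (cases s rule: ennreal_cases) auto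
    have "s + ennreal d = ennreal (r + d)" using r d by (simp add: ennreal_plus)
    moreover have "levy_prokhorov \<mu> \<nu> \<le> ennreal (r + d)"
      using r d by (intro mem) (auto simp: ennreal_less_iff)
    ultimately show "levy_prokhorov \<mu> \<nu> \<le> s + ennreal d" by simp
  qed
  then show ?thesis unfolding s_def .
qed

end
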